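(* Let $(X,d)$ be a metric space and let $\sigma$ be a reversible conical bicombing on $X$. Let $(e,E(X))$ denote the injective hull of $X$. Then there exists a reversible conical bicombing $\bar{\sigma}$ on $E(X)$ such that \[ e(\sigma_{xy}(t))=\bar{\sigma}_{e(x)e(y)}(t) \] for all $(x,y,t)\in X\times X\times[0,1]$.
   Context: A (geodesic) bicombing on a metric space $(X,d)$ is a map $\sigma\colon X\times X\times[0,1]\to X$ such that for every $(x,y)$ the path $\sigma_{xy}(\cdot):=\sigma(x,y,\cdot)$ is a metric geodesic from $x$ to $y$, i.e. $\sigma_{xy}(0)=x$, $\sigma_{xy}(1)=y$ and $d(\sigma_{xy}(s),\sigma_{xy}(t))=|s-t|\,d(x,y)$. It is conical if $d(\sigma_{xy}(t),\sigma_{x'y'}(t))\le (1-t)d(x,x')+t\,d(y,y')$ for all $x,y,x',y'\in X$, $t\in[0,1]$, and reversible if $\sigma_{xy}(t)=\sigma_{yx}(1-t)$ for all $x,y,t$. A metric space $Y$ is injective if for every metric space $B$, subset $A\subset B$ and 1-Lipschitz map $f\colon A\to Y$ there is a 1-Lipschitz extension $\bar f\colon B\to Y$. An injective hull of $X$ is a pair $(e,E(X))$ where $E(X)$ is an injective metric space and $e\colon X\to E(X)$ is an isometric embedding such that any 1-Lipschitz map $f\colon E(X)\to Z$ into a metric space $Z$ is an isometric embedding whenever $f\circ e$ is an isometric embedding. *)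

theory Defs
  imports "HOL-Analysis.Analysis"
begin

definition geodesic_path :: "'a metric \<Rightarrow> (real \<Rightarrow> 'a) \<Rightarrow> 'a \<Rightarrow> 'a \<Rightarrow> bool" where
  "geodesic_path m p x y \<longleftrightarrow>
     p 0 = x \<and> p 1 = y \<and> (\<forall>s\<in>{0..1}. p s \<in> mspace m) \<and>
     (\<forall>s\<in>{0..1}. \<forall>t\<in>{0..1}. mdist m (p s) (p t) = \<bar>s - t\<bar> * mdist m x y)"

definition bicombing :: "'a metric \<Rightarrow> ('a \<Rightarrow> 'a \<Rightarrow> real \<Rightarrow> 'a) \<Rightarrow> bool" where
  "bicombing m \<sigma> \<longleftrightarrow> (\<forall>x\<in>mspace m. \<forall>y\<in>mspace m. geodesic_path m (\<sigma> x y) x y)"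

definition conical_bicombing :: "'a metric \<Rightarrow> ('a \<Rightarrow> 'a \<Rightarrow> real \<Rightarrow> 'a) \<Rightarrow> bool" where
  "conical_bicombing m \<sigma> \<longleftrightarrow> bicombing m \<sigma> \<and>
     (\<forall>x\<in>mspace m. \<forall>y\<in>mspace m. \<forall>x'\<in>mspace m. \<forall>y'\<in>mspace m. \<forall>t\<in>{0..1}.
        mdist m (\<sigma> x y t) (\<sigma> x' y' t) \<le> (1 - t) * mdist m x x' + t * mdist m y y')"

definition reversible_bicombing :: "'a metric \<Rightarrow> ('a \<Rightarrow> 'a \<Rightarrow> real \<Rightarrow> 'a) \<Rightarrow> bool" where
  "reversible_bicombing m \<sigma> \<longleftrightarrow> bicombing m \<sigma> \<and>
     (\<forall>x\<in>mspace m. \<forall>y\<in>mspace m. \<forall>t\<in>{0..1}. \<sigma> x y t = \<sigma> y x (1 - t))"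

definition lip1_on :: "'a metric \<Rightarrow> 'b metric \<Rightarrow> 'a set \<Rightarrow> ('a \<Rightarrow> 'b) \<Rightarrow> bool" where
  "lip1_on m1 m2 A f \<longleftrightarrow> f ` A \<subseteq> mspace m2 \<and>
     (\<forall>a\<in>A. \<forall>b\<in>A. mdist m2 (f a) (f b) \<le> mdist m1 a b)"

definition isometric_embedding :: "'a metric \<Rightarrow> 'b metric \<Rightarrow> ('a \<Rightarrow> 'b) \<Rightarrow> bool" where
  "isometric_embedding m1 m2 f \<longleftrightarrow> f ` mspace m1 \<subseteq> mspace m2 \<and>
     (\<forall>a\<in>mspace m1. \<forall>b\<in>mspace m1. mdist m2 (f a) (f b) = mdist m1 a b)"

text \<open>Injectivity, with test metric spaces \<open>B\<close> ranging over metric spaces carried by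
  subsets of the type \<open>'c\<close> (HOL cannot quantify over all types inside a formula).\<close>
definition injective_metric_space :: "'c itself \<Rightarrow> 'b metric \<Rightarrow> bool" where
  "injective_metric_space (_::'c itself) Y \<longleftrightarrow>
     (\<forall>(B::'c metric) A f. A \<subseteq> mspace B \<and> lip1_on B Y A f \<longrightarrow>
        (\<exists>g. lip1_on B Y (mspace B) g \<and> (\<forall>a\<in>A. g a = f a)))"

text \<open>Injective hull \<open>(e, E)\<close> of \<open>X\<close>; test spaces for injectivity live on type \<open>'c\<close>,
  the target spaces \<open>Z\<close> of the minimality property live on type \<open>'d\<close>.\<close>
definition injective_hull ::
    "'c itself \<Rightarrow> 'd itself \<Rightarrow> 'a metric \<Rightarrow> 'b metric \<Rightarrow> ('a \<Rightarrow> 'b) \<Rightarrow> bool" where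
  "injective_hull TC (_::'d itself) X E e \<longleftrightarrow>
     injective_metric_space TC E \<and> isometric_embedding X E e \<and>
     (\<forall>(Z::'d metric) f. lip1_on E Z (mspace E) f \<and> isometric_embedding X Z (f \<circ> e)
        \<longrightarrow> isometric_embedding E Z f)"

end

theory Submission
  imports Defs
begin

lemma inj_nonempty:
  fixes E :: "'b metric"
  assumes inj: "injective_metric_space TYPE('b option) E"
  shows "mspace E \<noteq> {}"
proof -
  have ms: "Metric_space {None::'b option} (\<lambda>x y. 0)"
    by (auto simp: Metric_space_def)
  define B0 where "B0 = metric ({None::'b option}, \<lambda>x y. 0)"
  have "mspace B0 = {None}" using ms by (simp add: B0_def Metric_space.mspace_metric)
  moreover have "lip1_on B0 E {} (\<lambda>x. undefined)" by (simp add: lip1_on_def)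
  ultimately obtain g where "lip1_on B0 E (mspace B0) g"
    using inj unfolding injective_metric_space_def by (metis empty_subsetI)
  then show ?thesis using \<open>mspace B0 = {None}\<close> by (auto simp: lip1_on_def)
qed

lemma inj_onepoint:
  fixes E :: "'b metric"
  assumes inj: "injective_metric_space TYPE('b option) E"
    and form: "\<And>w w'. w \<in> mspace E \<Longrightarrow> w' \<in> mspace E \<Longrightarrow> mdist E w w' \<le> r w + r w'"
    and lip: "\<And>w w'. w \<in> mspace E \<Longrightarrow> w' \<in> mspace E \<Longrightarrow> r w \<le> r w' + mdist E w w'"
  shows "\<exists>q\<in>mspace E. \<forall>w\<in>mspace E. mdist E q w \<le> r w"
proof (cases "\<exists>w0\<in>mspace E. r w0 \<le> 0")
  case True
  then obtain w0 where w0: "w0 \<in> mspace E" "r w0 \<le> 0" by blast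
  have "\<forall>w\<in>mspace E. mdist E w0 w \<le> r w"
    using form[of w0] w0 by (smt (verit))
  then show ?thesis using w0 by blast
next
  case False
  hence pos: "\<And>w. w \<in> mspace E \<Longrightarrow> r w > 0" by force
  define S where "S = insert None (Some ` mspace E)"
  define dd where "dd = (\<lambda>x y. case x of None \<Rightarrow> (case y of None \<Rightarrow> 0 | Some b \<Rightarrow> max 0 (r b))
                   | Some a \<Rightarrow> (case y of None \<Rightarrow> max 0 (r a) | Some b \<Rightarrow> mdist E a b))"
  have ms: "Metric_space S dd"
  proof
    fix x y show "0 \<le> dd x y" by (auto simp: dd_def split: option.splits)
    show "dd x y = dd y x" by (auto simp: dd_def mdist_commute split: option.splits)
  next
    fix x y assume "x \<in> S" "y \<in> S"
    then show "dd x y = 0 \<longleftrightarrow> x = y"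
      using pos by (auto simp: dd_def S_def split: option.splits) (metis less_irrefl)+
  next
    fix x y z assume xyz: "x \<in> S" "y \<in> S" "z \<in> S"
    have xS: "x = None \<or> (\<exists>a\<in>mspace E. x = Some a)" and yS: "y = None \<or> (\<exists>a\<in>mspace E. y = Some a)"
      and zS: "z = None \<or> (\<exists>a\<in>mspace E. z = Some a)" using xyz by (auto simp: S_def)
    have nn: "0 \<le> dd u v" for u v by (auto simp: dd_def split: option.splits)
    show "dd x z \<le> dd x y + dd y z"
    proof -
      { fix a b c assume abc: "a \<in> mspace E" "b \<in> mspace E" "c \<in> mspace E"
        have "max 0 (r c) \<le> max 0 (r b) + mdist E b c" using lip[of c b] abc pos by (simp add: mdist_commute)
        moreover have "mdist E a c \<le> max 0 (r a) + max 0 (r c)" using form[of a c] abc by simp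
        moreover have "max 0 (r a) \<le> mdist E a b + max 0 (r b)" using lip[of a b] abc pos by simp
        moreover have "mdist E a c \<le> mdist E a b + mdist E b c" using mdist_triangle[OF abc] .
        ultimately have "max 0 (r c) \<le> max 0 (r b) + mdist E b c" "mdist E a c \<le> max 0 (r a) + max 0 (r c)"
          "max 0 (r a) \<le> mdist E a b + max 0 (r b)" "mdist E a c \<le> mdist E a b + mdist E b c"
          "r c \<le> max 0 (r b) + mdist E b c" "r a \<le> mdist E a b + max 0 (r b)" by auto }
      note key = this
      show ?thesis
        using xS yS zS
      proof (elim disjE bexE)
      qed (simp_all add: dd_def key nn)
    qed
  qed
  define B where "B = metric (S, dd)"
  have mB: "mspace B = S" "mdist B = dd" using ms by (auto simp: B_def Metric_space.mspace_metric Metric_space.mdist_metric)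
  have "lip1_on B E (Some ` mspace E) the"
    by (auto simp: lip1_on_def mB dd_def)
  moreover have "Some ` mspace E \<subseteq> mspace B" by (auto simp: mB S_def)
  ultimately have "\<exists>g. lip1_on B E (mspace B) g \<and> (\<forall>a\<in>Some ` mspace E. g a = the a)"
    using inj[unfolded injective_metric_space_def, rule_format, of "Some ` mspace E" B the] by blast
  then obtain g where g: "lip1_on B E (mspace B) g" "\<forall>a\<in>Some ` mspace E. g a = the a"
    by blast
  have "g None \<in> mspace E" using g(1) by (auto simp: lip1_on_def mB S_def)
  moreover have "\<forall>w\<in>mspace E. mdist E (g None) w \<le> r w"
  proof
    fix w assume w: "w \<in> mspace E"
    have "mdist E (g None) (g (Some w)) \<le> dd None (Some w)"
      using g(1) w by (auto simp: lip1_on_def mB S_def)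
    then show "mdist E (g None) w \<le> r w" using g(2) w pos[OF w] by (auto simp: dd_def)
  qed
  ultimately show ?thesis by blast
qed

lemma inj_hyperconvex:
  fixes E :: "'b metric" and c :: "'i \<Rightarrow> 'b"
  assumes inj: "injective_metric_space TYPE('b option) E"
    and I: "I \<noteq> {}" and cI: "\<And>i. i \<in> I \<Longrightarrow> c i \<in> mspace E"
    and rad: "\<And>i j. i \<in> I \<Longrightarrow> j \<in> I \<Longrightarrow> mdist E (c i) (c j) \<le> \<rho> i + \<rho> j"
  shows "\<exists>q\<in>mspace E. \<forall>i\<in>I. mdist E q (c i) \<le> \<rho> i"
proof -
  define r where "r w = (INF i\<in>I. \<rho> i + mdist E (c i) w)" for w
  have rpos: "\<And>i. i \<in> I \<Longrightarrow> 0 \<le> \<rho> i" using rad cI by (smt (verit) mdist_zero)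
  have bdd: "bdd_below ((\<lambda>i. \<rho> i + mdist E (c i) w) ` I)" for w
    by (rule bdd_belowI[of _ 0]) (auto intro: add_nonneg_nonneg rpos)
  have rle: "i \<in> I \<Longrightarrow> r w \<le> \<rho> i + mdist E (c i) w" for i w
    unfolding r_def by (rule cINF_lower[OF bdd])
  have form: "mdist E w w' \<le> r w + r w'" if w: "w \<in> mspace E" "w' \<in> mspace E" for w w'
  proof -
    have "mdist E w w' - r w' \<le> r w" unfolding r_def[of w]
    proof (rule cINF_greatest[OF I])
      fix i assume i: "i \<in> I"
      have "mdist E w w' - \<rho> i - mdist E (c i) w \<le> r w'" unfolding r_def
      proof (rule cINF_greatest[OF I])
        fix j assume j: "j \<in> I"
        have "mdist E w w' \<le> mdist E w (c i) + mdist E (c i) (c j) + mdist E (c j) w'"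
          using mdist_triangle[where m=E and x=w and y="c i" and z=w'] mdist_triangle[where m=E and x="c i" and y="c j" and z=w'] w cI i j by force
        then show "mdist E w w' - \<rho> i - mdist E (c i) w \<le> \<rho> j + mdist E (c j) w'"
          using rad[OF i j] by (simp add: mdist_commute)
      qed
      then show "mdist E w w' - r w' \<le> \<rho> i + mdist E (c i) w" by simp
    qed
    then show ?thesis by simp
  qed
  have lip: "r w \<le> r w' + mdist E w w'" if w: "w \<in> mspace E" "w' \<in> mspace E" for w w'
  proof -
    have "r w - mdist E w w' \<le> r w'" unfolding r_def[of w']
    proof (rule cINF_greatest[OF I])
      fix j assume j: "j \<in> I"
      have "r w \<le> \<rho> j + mdist E (c j) w" by (rule rle[OF j])
      also have "\<dots> \<le> \<rho> j + mdist E (c j) w' + mdist E w' w"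
        using mdist_triangle[where m=E and x="c j" and y=w' and z=w] cI j w by simp
      finally show "r w - mdist E w w' \<le> \<rho> j + mdist E (c j) w'"
        by (simp add: mdist_commute)
    qed
    then show ?thesis by simp
  qed
  obtain q where q: "q \<in> mspace E" "\<forall>w\<in>mspace E. mdist E q w \<le> r w"
    using inj_onepoint[OF inj form lip] by blast
  have "\<forall>i\<in>I. mdist E q (c i) \<le> \<rho> i"
  proof
    fix i assume i: "i \<in> I"
    have "mdist E q (c i) \<le> r (c i)" using q cI i by blast
    also have "\<dots> \<le> \<rho> i" using rle[OF i, of "c i"] mdist_zero cI[OF i] by (metis add.right_neutral)
    finally show "mdist E q (c i) \<le> \<rho> i" .
  qed
  then show ?thesis using q by blast
qed

lemma inj_general:
  fixes E :: "'b metric" and B :: "'c metric"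
  assumes inj: "injective_metric_space TYPE('b option) E"
    and AB: "A \<subseteq> mspace B" and lf: "lip1_on B E A f"
  shows "\<exists>g. lip1_on B E (mspace B) g \<and> (\<forall>a\<in>A. g a = f a)"
proof -
  define P where "P = {G. G \<subseteq> mspace B \<times> mspace E \<and> (\<forall>a\<in>A. (a, f a) \<in> G) \<and>
      (\<forall>a u b v. (a,u) \<in> G \<longrightarrow> (b,v) \<in> G \<longrightarrow> mdist E u v \<le> mdist B a b)}"
  define G0 where "G0 = (\<lambda>a. (a, f a)) ` A"
  have fA: "\<And>a. a \<in> A \<Longrightarrow> f a \<in> mspace E" using lf by (auto simp: lip1_on_def)
  have fL: "\<And>a b. a \<in> A \<Longrightarrow> b \<in> A \<Longrightarrow> mdist E (f a) (f b) \<le> mdist B a b" using lf by (auto simp: lip1_on_def)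
  have "\<forall>C\<in>chains P. \<exists>U\<in>P. \<forall>X\<in>C. X \<subseteq> U"
  proof
    fix C assume C: "C \<in> chains P"
    hence CP: "C \<subseteq> P" and ch: "\<And>X Y. X \<in> C \<Longrightarrow> Y \<in> C \<Longrightarrow> X \<subseteq> Y \<or> Y \<subseteq> X"
      by (auto simp: chains_def chain_subset_def)
    define U where "U = G0 \<union> \<Union>C"
    have "U \<in> P"
    proof -
      have "U \<subseteq> mspace B \<times> mspace E" using CP AB fA by (auto simp: U_def G0_def P_def)
      moreover have "\<forall>a\<in>A. (a, f a) \<in> U" by (auto simp: U_def G0_def)
      moreover have "mdist E u v \<le> mdist B a b" if au: "(a,u) \<in> U" and bv: "(b,v) \<in> U" for a u b v
      proof -
        have inG: "(a,u) \<in> G0 \<or> (\<exists>X\<in>C. (a,u) \<in> X)" "(b,v) \<in> G0 \<or> (\<exists>X\<in>C. (b,v) \<in> X)"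
          using au bv by (auto simp: U_def)
        have G0X: "X \<in> C \<Longrightarrow> G0 \<subseteq> X" for X using CP by (auto simp: P_def G0_def)
        have lipX: "X \<in> C \<Longrightarrow> (a',u') \<in> X \<Longrightarrow> (b',v') \<in> X \<Longrightarrow> mdist E u' v' \<le> mdist B a' b'" for X a' u' b' v'
          using CP by (auto simp: P_def)
        show ?thesis
        proof (cases "(a,u) \<in> G0")
          case True
          note T1 = this
          show ?thesis
          proof (cases "(b,v) \<in> G0")
            case True
            then show ?thesis using T1 fL by (auto simp: G0_def)
          next
            case False
            then obtain X where "X \<in> C" "(b,v) \<in> X" using inG by blast
            then show ?thesis using T1 G0X lipX by blast
          qed
        next
          case False
          then obtain X where X: "X \<in> C" "(a,u) \<in> X" using inG by blast
          show ?thesis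
          proof (cases "(b,v) \<in> G0")
            case True
            then show ?thesis using X G0X lipX by blast
          next
            case False
            then obtain Y where Y: "Y \<in> C" "(b,v) \<in> Y" using inG by blast
            from ch[OF X(1) Y(1)] show ?thesis
            proof
              assume "X \<subseteq> Y" then show ?thesis using X Y lipX by blast
            next
              assume "Y \<subseteq> X" then show ?thesis using X Y lipX by blast
            qed
          qed
        qed
      qed
      ultimately show ?thesis unfolding P_def by blast
    qed
    moreover have "\<forall>X\<in>C. X \<subseteq> U" by (auto simp: U_def)
    ultimately show "\<exists>U\<in>P. \<forall>X\<in>C. X \<subseteq> U" by blast
  qed
  from Zorn_Lemma2[OF this] obtain M where MP: "M \<in> P" and Mmax: "\<And>X. X \<in> P \<Longrightarrow> M \<subseteq> X \<Longrightarrow> X = M"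
    by blast
  have Msub: "M \<subseteq> mspace B \<times> mspace E" and MA: "\<And>a. a \<in> A \<Longrightarrow> (a, f a) \<in> M"
    and Mlip: "\<And>a u b v. (a,u) \<in> M \<Longrightarrow> (b,v) \<in> M \<Longrightarrow> mdist E u v \<le> mdist B a b"
    using MP by (auto simp: P_def)
  have total: "\<exists>v. (b, v) \<in> M" if b: "b \<in> mspace B" for b
  proof (rule ccontr)
    assume nb: "\<nexists>v. (b, v) \<in> M"
    have "\<exists>v\<in>mspace E. \<forall>au\<in>M. mdist E v (snd au) \<le> mdist B b (fst au)"
    proof (cases "M = {}")
      case True
      then show ?thesis using inj_nonempty[OF inj] by blast
    next
      case False
      show ?thesis
      proof (rule inj_hyperconvex[OF inj False])
        fix i assume "i \<in> M" then show "snd i \<in> mspace E" using Msub by auto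
      next
        fix i j assume i: "i \<in> M" and j: "j \<in> M"
        have "mdist E (snd i) (snd j) \<le> mdist B (fst i) (fst j)"
          using Mlip[of "fst i" "snd i" "fst j" "snd j"] i j by simp
        also have "\<dots> \<le> mdist B b (fst i) + mdist B b (fst j)"
        proof -
          have "fst i \<in> mspace B" "fst j \<in> mspace B" using i j Msub by auto
          then show ?thesis using mdist_triangle[where m=B and x="fst i" and y=b and z="fst j"] b
            by (simp add: mdist_commute)
        qed
        finally show "mdist E (snd i) (snd j) \<le> mdist B b (fst i) + mdist B b (fst j)" .
      qed
    qed
    then obtain v where v: "v \<in> mspace E" "\<And>a u. (a,u) \<in> M \<Longrightarrow> mdist E v u \<le> mdist B b a"
      by fastforce
    define M' where "M' = insert (b,v) M"
    have "M' \<in> P"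
    proof -
      have "M' \<subseteq> mspace B \<times> mspace E" using Msub b v by (auto simp: M'_def)
      moreover have "\<forall>a\<in>A. (a, f a) \<in> M'" using MA by (auto simp: M'_def)
      moreover have "mdist E u w \<le> mdist B a c" if "(a,u) \<in> M'" "(c,w) \<in> M'" for a u c w
      proof -
        have v2: "mdist E u v \<le> mdist B a b" if "(a,u) \<in> M" for a u
          using v(2)[OF that] by (simp add: mdist_commute)
        have vv: "mdist E v v = 0" using v(1) by simp
        show ?thesis using that v(2) v2 vv Mlip[of a u c w] unfolding M'_def by auto
      qed
      ultimately show ?thesis unfolding P_def by blast
    qed
    moreover have "M \<subseteq> M'" by (auto simp: M'_def)
    ultimately have "M' = M" using Mmax by blast
    then show False using nb by (auto simp: M'_def)
  qed
  define g where "g a = (SOME u. (a,u) \<in> M)" for a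
  have gM: "a \<in> mspace B \<Longrightarrow> (a, g a) \<in> M" for a
    unfolding g_def using total by (rule someI_ex) 
  have "lip1_on B E (mspace B) g"
    unfolding lip1_on_def using gM Msub Mlip by blast
  moreover have "\<forall>a\<in>A. g a = f a"
  proof
    fix a assume a: "a \<in> A"
    have "mdist E (g a) (f a) \<le> mdist B a a" using Mlip[OF gM MA[OF a]] a AB by blast
    then show "g a = f a" using a AB gM[of a] Msub fA[OF a]
      by (metis mdist_zero mdist_nonneg order_antisym subsetD mem_Sigma_iff)
  qed
  ultimately show ?thesis by blast
qed

definition lin2 :: "'b \<Rightarrow> 'b \<Rightarrow> real \<Rightarrow> 'b \<Rightarrow> real" where
  "lin2 p q t = (\<lambda>w. (if w = p then 1 - t else 0) + (if w = q then t else 0))"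

definition mpair :: "('b \<Rightarrow> real) \<Rightarrow> ('b \<Rightarrow> real) \<Rightarrow> real" where
  "mpair \<phi> \<mu> = (\<Sum>w\<in>{w. \<mu> w \<noteq> 0}. \<phi> w * \<mu> w)"

definition lipf :: "'b metric \<Rightarrow> ('b \<Rightarrow> real) set" where
  "lipf E = {\<phi>. \<forall>a\<in>mspace E. \<forall>b\<in>mspace E. \<phi> a - \<phi> b \<le> mdist E a b}"

definition linset :: "'b metric \<Rightarrow> ('b \<Rightarrow> real) set" where
  "linset E = {lin2 p q t | p q t. p \<in> mspace E \<and> q \<in> mspace E \<and> 0 \<le> t \<and> t \<le> 1}"

definition kdist :: "'b metric \<Rightarrow> ('b \<Rightarrow> real) \<Rightarrow> ('b \<Rightarrow> real) \<Rightarrow> real" where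
  "kdist E \<mu> \<nu> = (if \<mu> \<in> linset E \<and> \<nu> \<in> linset E then (SUP \<phi>\<in>lipf E. mpair \<phi> \<mu> - mpair \<phi> \<nu>) else 0)"

lemma mdist_self [simp]: "x \<in> mspace m \<Longrightarrow> mdist m x x = 0"
  by simp

lemma mdist_pos: "x \<noteq> y \<Longrightarrow> x \<in> mspace m \<Longrightarrow> y \<in> mspace m \<Longrightarrow> 0 < mdist m x y"
  by (metis mdist_nonneg mdist_zero less_eq_real_def)

lemma mpair_lin2: "mpair \<phi> (lin2 p q t) = (1 - t) * \<phi> p + t * \<phi> q"
proof -
  have sub: "{w. lin2 p q t w \<noteq> 0} \<subseteq> {p,q}" by (auto simp: lin2_def)
  have "mpair \<phi> (lin2 p q t) = (\<Sum>w\<in>{p,q}. \<phi> w * lin2 p q t w)"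
    unfolding mpair_def by (rule sum.mono_neutral_left) (use sub in auto)
  then show ?thesis by (cases "p = q") (auto simp: lin2_def algebra_simps)
qed

lemma mpair_neg: "mpair (\<lambda>w. - \<phi> w) \<mu> = - mpair \<phi> \<mu>"
  by (simp add: mpair_def sum_negf)

lemma mpair_zero: "mpair (\<lambda>w. 0) \<mu> = 0"
  by (simp add: mpair_def)

lemma lipf_neg: "\<phi> \<in> lipf E \<Longrightarrow> (\<lambda>w. - \<phi> w) \<in> lipf E"
  unfolding lipf_def by (auto simp: mdist_commute) (metis mdist_commute add.commute diff_le_eq)

lemma lipf_zero: "(\<lambda>w. 0) \<in> lipf E"
  by (simp add: lipf_def)

lemma lipf_abs: "\<phi> \<in> lipf E \<Longrightarrow> a \<in> mspace E \<Longrightarrow> b \<in> mspace E \<Longrightarrow> \<bar>\<phi> a - \<phi> b\<bar> \<le> mdist E a b"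
  unfolding lipf_def by (auto simp: abs_le_iff) (metis mdist_commute minus_diff_eq)

lemma lipf_dist: "q \<in> mspace E \<Longrightarrow> (\<lambda>w. mdist E w q) \<in> lipf E"
  unfolding lipf_def using mdist_triangle[of _ E _ q]
  by (auto simp: mdist_commute) (smt (verit, ccfv_threshold) mdist_commute mdist_triangle)

lemma linsetD: "\<mu> \<in> linset E \<Longrightarrow> \<exists>p q t. \<mu> = lin2 p q t \<and> p \<in> mspace E \<and> q \<in> mspace E \<and> 0 \<le> t \<and> t \<le> 1"
  by (auto simp: linset_def)

lemma linsetI: "p \<in> mspace E \<Longrightarrow> q \<in> mspace E \<Longrightarrow> 0 \<le> t \<Longrightarrow> t \<le> 1 \<Longrightarrow> lin2 p q t \<in> linset E"
  by (auto simp: linset_def)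

lemma kd_bdd:
  assumes "\<mu> \<in> linset E" "\<nu> \<in> linset E"
  shows "bdd_above ((\<lambda>\<phi>. mpair \<phi> \<mu> - mpair \<phi> \<nu>) ` lipf E)"
proof -
  obtain p q t where \<mu>: "\<mu> = lin2 p q t" "p \<in> mspace E" "q \<in> mspace E" "0 \<le> t" "t \<le> 1"
    using linsetD[OF assms(1)] by blast
  obtain p' q' s where \<nu>: "\<nu> = lin2 p' q' s" "p' \<in> mspace E" "q' \<in> mspace E" "0 \<le> s" "s \<le> 1"
    using linsetD[OF assms(2)] by blast
  define K where "K = mdist E p p' + mdist E p q' + mdist E q p' + mdist E q q'"
  show ?thesis
  proof (rule bdd_aboveI2)
    fix \<phi> assume \<phi>: "\<phi> \<in> lipf E"
    have id: "mpair \<phi> \<mu> - mpair \<phi> \<nu> = (1 - t) * (1 - s) * (\<phi> p - \<phi> p') + (1 - t) * s * (\<phi> p - \<phi> q')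
        + t * (1 - s) * (\<phi> q - \<phi> p') + t * s * (\<phi> q - \<phi> q')"
      by (simp add: \<mu> \<nu> mpair_lin2 algebra_simps)
    have b: "c * (\<phi> x - \<phi> y) \<le> mdist E x y" if "0 \<le> c" "c \<le> 1" "x \<in> mspace E" "y \<in> mspace E" for c x y
    proof -
      have "c * (\<phi> x - \<phi> y) \<le> c * mdist E x y"
        using \<phi> that by (intro mult_left_mono) (auto simp: lipf_def)
      also have "\<dots> \<le> mdist E x y" using that mult_left_le_one_le[of "mdist E x y" c] by simp
      finally show ?thesis .
    qed
    have "(1 - t) * (1 - s) * (\<phi> p - \<phi> p') \<le> mdist E p p'" by (rule b) (use \<mu> \<nu> in \<open>auto intro: mult_le_one\<close>)
    moreover have "(1 - t) * s * (\<phi> p - \<phi> q') \<le> mdist E p q'" by (rule b) (use \<mu> \<nu> in \<open>auto intro: mult_le_one\<close>)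
    moreover have "t * (1 - s) * (\<phi> q - \<phi> p') \<le> mdist E q p'" by (rule b) (use \<mu> \<nu> in \<open>auto intro: mult_le_one\<close>)
    moreover have "t * s * (\<phi> q - \<phi> q') \<le> mdist E q q'" by (rule b) (use \<mu> \<nu> in \<open>auto intro: mult_le_one\<close>)
    ultimately show "mpair \<phi> \<mu> - mpair \<phi> \<nu> \<le> K" unfolding id K_def by linarith
  qed
qed

lemma kd_lower:
  assumes "\<mu> \<in> linset E" "\<nu> \<in> linset E" "\<phi> \<in> lipf E"
  shows "mpair \<phi> \<mu> - mpair \<phi> \<nu> \<le> kdist E \<mu> \<nu>"
  unfolding kdist_def using assms by (simp add: cSUP_upper[OF assms(3) kd_bdd[OF assms(1,2)]])

lemma kd_upper:
  assumes "\<mu> \<in> linset E" "\<nu> \<in> linset E" "\<And>\<phi>. \<phi> \<in> lipf E \<Longrightarrow> mpair \<phi> \<mu> - mpair \<phi> \<nu> \<le> K"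
  shows "kdist E \<mu> \<nu> \<le> K"
proof -
  have "lipf E \<noteq> {}" using lipf_zero by blast
  then show ?thesis unfolding kdist_def using assms by (simp add: cSUP_least)
qed

lemma kd_nonneg: "0 \<le> kdist E \<mu> \<nu>"
proof (cases "\<mu> \<in> linset E \<and> \<nu> \<in> linset E")
  case True
  then show ?thesis using kd_lower[OF _ _ lipf_zero, of \<mu> E \<nu>] by (simp add: mpair_zero)
qed (auto simp: kdist_def)

lemma kd_commute: "kdist E \<mu> \<nu> = kdist E \<nu> \<mu>"
proof (cases "\<mu> \<in> linset E \<and> \<nu> \<in> linset E")
  case True
  have "kdist E \<mu> \<nu> \<le> kdist E \<nu> \<mu>" if "\<mu> \<in> linset E" "\<nu> \<in> linset E" for \<mu> \<nu>
  proof (rule kd_upper[OF that])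
    fix \<phi> assume "\<phi> \<in> lipf E"
    then have "mpair (\<lambda>w. - \<phi> w) \<nu> - mpair (\<lambda>w. - \<phi> w) \<mu> \<le> kdist E \<nu> \<mu>"
      using kd_lower[OF that(2,1) lipf_neg] by blast
    then show "mpair \<phi> \<mu> - mpair \<phi> \<nu> \<le> kdist E \<nu> \<mu>" by (simp add: mpair_neg)
  qed
  then show ?thesis using True by (meson order_antisym)
qed (auto simp: kdist_def)

lemma kd_self: "\<mu> \<in> linset E \<Longrightarrow> kdist E \<mu> \<mu> = 0"
  using kd_upper[of \<mu> E \<mu> 0] kd_nonneg[of E \<mu> \<mu>] by simp

lemma kd_triangle:
  assumes "\<mu> \<in> linset E" "\<nu> \<in> linset E" "\<rho> \<in> linset E"
  shows "kdist E \<mu> \<rho> \<le> kdist E \<mu> \<nu> + kdist E \<nu> \<rho>"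
proof (rule kd_upper[OF assms(1,3)])
  fix \<phi> assume "\<phi> \<in> lipf E"
  then show "mpair \<phi> \<mu> - mpair \<phi> \<rho> \<le> kdist E \<mu> \<nu> + kdist E \<nu> \<rho>"
    using kd_lower[OF assms(1,2)] kd_lower[OF assms(2,3)] by fastforce
qed

lemma kd_pos:
  assumes "\<mu> \<in> linset E" "\<nu> \<in> linset E" "\<mu> \<noteq> \<nu>"
  shows "0 < kdist E \<mu> \<nu>"
proof -
  obtain p q t where \<mu>: "\<mu> = lin2 p q t" "p \<in> mspace E" "q \<in> mspace E" "0 \<le> t" "t \<le> 1"
    using linsetD[OF assms(1)] by blast
  obtain p' q' s where \<nu>: "\<nu> = lin2 p' q' s" "p' \<in> mspace E" "q' \<in> mspace E" "0 \<le> s" "s \<le> 1"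
    using linsetD[OF assms(2)] by blast
  obtain w0 where w0: "\<mu> w0 \<noteq> \<nu> w0" using assms(3) by (auto simp: fun_eq_iff)
  have w0in: "w0 \<in> {p,q,p',q'}"
  proof (rule ccontr)
    assume "w0 \<notin> {p,q,p',q'}"
    then have "\<mu> w0 = 0" "\<nu> w0 = 0" by (auto simp: \<mu> \<nu> lin2_def)
    then show False using w0 by simp
  qed
  have w0E: "w0 \<in> mspace E" using w0in \<mu> \<nu> by auto
  define T where "T = {p,q,p',q'} - {w0}"
  define r where "r = Min (insert 1 ((\<lambda>v. mdist E w0 v) ` T))"
  have TE: "T \<subseteq> mspace E" using \<mu> \<nu> by (auto simp: T_def)
  have fin: "finite (insert 1 ((\<lambda>v. mdist E w0 v) ` T))" by (simp add: T_def)
  have rpos: "0 < r" unfolding r_def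
  proof (subst Min_gr_iff[OF fin])
    show "insert 1 ((\<lambda>v. mdist E w0 v) ` T) \<noteq> {}" by simp
    show "\<forall>a\<in>insert 1 ((\<lambda>v. mdist E w0 v) ` T). 0 < a"
    proof
      fix a assume "a \<in> insert 1 ((\<lambda>v. mdist E w0 v) ` T)"
      then consider "a = 1" | v where "v \<in> T" "a = mdist E w0 v" by blast
      then show "0 < a"
      proof cases
        case 2
        then have "v \<noteq> w0" "v \<in> mspace E" using TE by (auto simp: T_def)
        then show ?thesis using 2 w0E mdist_pos[of v w0 E] by (simp add: mdist_commute)
      qed simp
    qed
  qed
  have rle: "v \<in> T \<Longrightarrow> r \<le> mdist E w0 v" for v unfolding r_def using fin by (intro Min_le) auto
  define \<phi> where "\<phi> w = max 0 (r - mdist E w w0)" for w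
  have \<phi>lip: "\<phi> \<in> lipf E"
    unfolding lipf_def
  proof (intro CollectI ballI)
    fix a b assume ab: "a \<in> mspace E" "b \<in> mspace E"
    have "mdist E b w0 \<le> mdist E b a + mdist E a w0" using mdist_triangle[OF ab(2) ab(1) w0E] .
    moreover have "mdist E b a = mdist E a b" "0 \<le> mdist E a b" by (simp_all add: mdist_commute)
    ultimately show "\<phi> a - \<phi> b \<le> mdist E a b" unfolding \<phi>_def by linarith
  qed
  have \<phi>val: "v \<in> {p,q,p',q'} \<Longrightarrow> \<phi> v = (if v = w0 then r else 0)" for v
  proof (cases "v = w0")
    case True then show ?thesis using rpos w0E by (simp add: \<phi>_def)
  next
    case False
    assume "v \<in> {p,q,p',q'}"
    then have "v \<in> T" using False by (auto simp: T_def)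
    then have "r \<le> mdist E v w0" using rle by (simp add: mdist_commute)
    then show ?thesis using False by (simp add: \<phi>_def)
  qed
  have "mpair \<phi> \<mu> = r * \<mu> w0"
    unfolding \<mu> mpair_lin2 using \<phi>val[of p] \<phi>val[of q]
    by (cases "p = w0"; cases "q = w0") (simp_all add: lin2_def algebra_simps)
  moreover have "mpair \<phi> \<nu> = r * \<nu> w0"
    unfolding \<nu> mpair_lin2 using \<phi>val[of p'] \<phi>val[of q']
    by (cases "p' = w0"; cases "q' = w0") (simp_all add: lin2_def algebra_simps)
  ultimately have diff: "mpair \<phi> \<mu> - mpair \<phi> \<nu> = r * (\<mu> w0 - \<nu> w0)" by (simp add: algebra_simps)
  show ?thesis
  proof (cases "\<mu> w0 > \<nu> w0")
    case True
    then have "0 < mpair \<phi> \<mu> - mpair \<phi> \<nu>" using diff rpos by simp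
    then show ?thesis using kd_lower[OF assms(1,2) \<phi>lip] by linarith
  next
    case False
    then have "0 < mpair (\<lambda>w. - \<phi> w) \<mu> - mpair (\<lambda>w. - \<phi> w) \<nu>" using diff rpos w0
    proof -
      have "\<mu> w0 < \<nu> w0" using False w0 by simp
      then have "0 < r * (\<nu> w0 - \<mu> w0)" using rpos by simp
      then show ?thesis using diff by (simp add: mpair_neg algebra_simps)
    qed
    then show ?thesis using kd_lower[OF assms(1,2) lipf_neg[OF \<phi>lip]] by linarith
  qed
qed

lemma kd_metric: "Metric_space (linset E) (kdist E)"
proof
  fix x y show "0 \<le> kdist E x y" by (rule kd_nonneg)
  show "kdist E x y = kdist E y x" by (rule kd_commute)
next
  fix x y assume "x \<in> linset E" "y \<in> linset E"
  then show "kdist E x y = 0 \<longleftrightarrow> x = y" using kd_self kd_pos by (metis less_irrefl)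
next
  fix x y z assume "x \<in> linset E" "y \<in> linset E" "z \<in> linset E"
  then show "kdist E x z \<le> kdist E x y + kdist E y z" by (rule kd_triangle)
qed

lemma lin2_rev: "lin2 p q t = lin2 q p (1 - t)"
  by (auto simp: lin2_def fun_eq_iff)

lemma lin2_0: "lin2 p q 0 = lin2 p p 0"
  by (auto simp: lin2_def fun_eq_iff)

lemma lin2_1: "lin2 p q 1 = lin2 q q 0"
  by (auto simp: lin2_def fun_eq_iff)

lemma kd_geo:
  assumes "p \<in> mspace E" "q \<in> mspace E" "0 \<le> s" "s \<le> 1" "0 \<le> t" "t \<le> 1"
  shows "kdist E (lin2 p q s) (lin2 p q t) \<le> \<bar>s - t\<bar> * mdist E p q"
proof (rule kd_upper)
  show "lin2 p q s \<in> linset E" "lin2 p q t \<in> linset E" using assms by (auto intro: linsetI)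
  fix \<phi> assume \<phi>: "\<phi> \<in> lipf E"
  have "mpair \<phi> (lin2 p q s) - mpair \<phi> (lin2 p q t) = (t - s) * (\<phi> p - \<phi> q)"
    by (simp add: mpair_lin2 algebra_simps)
  also have "\<dots> \<le> \<bar>t - s\<bar> * \<bar>\<phi> p - \<phi> q\<bar>" by (metis abs_ge_self abs_mult)
  also have "\<dots> \<le> \<bar>s - t\<bar> * mdist E p q"
    using lipf_abs[OF \<phi> assms(1,2)] by (simp add: abs_minus_commute mult_left_mono)
  finally show "mpair \<phi> (lin2 p q s) - mpair \<phi> (lin2 p q t) \<le> \<bar>s - t\<bar> * mdist E p q" .
qed

lemma kd_con:
  assumes "p \<in> mspace E" "q \<in> mspace E" "p' \<in> mspace E" "q' \<in> mspace E" "0 \<le> t" "t \<le> 1"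
  shows "kdist E (lin2 p q t) (lin2 p' q' t) \<le> (1 - t) * mdist E p p' + t * mdist E q q'"
proof (rule kd_upper)
  show "lin2 p q t \<in> linset E" "lin2 p' q' t \<in> linset E" using assms by (auto intro: linsetI)
  fix \<phi> assume \<phi>: "\<phi> \<in> lipf E"
  have "mpair \<phi> (lin2 p q t) - mpair \<phi> (lin2 p' q' t) = (1 - t) * (\<phi> p - \<phi> p') + t * (\<phi> q - \<phi> q')"
    by (simp add: mpair_lin2 algebra_simps)
  also have "\<dots> \<le> (1 - t) * mdist E p p' + t * mdist E q q'"
    using \<phi> assms by (intro add_mono mult_left_mono) (auto simp: lipf_def)
  finally show "mpair \<phi> (lin2 p q t) - mpair \<phi> (lin2 p' q' t) \<le> (1 - t) * mdist E p p' + t * mdist E q q'" .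
qed

lemma geod_from_lip:
  assumes P0: "P 0 = p" and P1: "P 1 = q" and Pin: "\<And>s. s \<in> {0..1} \<Longrightarrow> P s \<in> mspace m"
    and Pl: "\<And>s t. s \<in> {0..1} \<Longrightarrow> t \<in> {0..1} \<Longrightarrow> mdist m (P s) (P t) \<le> \<bar>s - t\<bar> * mdist m p q"
  shows "geodesic_path m P p q"
proof -
  have le: "mdist m (P s) (P t) = \<bar>s - t\<bar> * mdist m p q" if st: "s \<in> {0..1}" "t \<in> {0..1}" "s \<le> t" for s t
  proof -
    have z: "(0::real) \<in> {0..1}" "(1::real) \<in> {0..1}" by auto
    have "mdist m (P 0) (P 1) \<le> mdist m (P 0) (P s) + mdist m (P s) (P t) + mdist m (P t) (P 1)"
      using mdist_triangle[OF Pin[OF z(1)] Pin[OF st(1)] Pin[OF st(2)]]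
        mdist_triangle[OF Pin[OF z(1)] Pin[OF st(2)] Pin[OF z(2)]] by linarith
    then have "mdist m p q \<le> mdist m (P 0) (P s) + mdist m (P s) (P t) + mdist m (P t) (P 1)"
      using P0 P1 by simp
    moreover have "mdist m (P 0) (P s) \<le> s * mdist m p q" using Pl[OF z(1) st(1)] st by simp
    moreover have "mdist m (P t) (P 1) \<le> (1 - t) * mdist m p q" using Pl[OF st(2) z(2)] st by simp
    ultimately have "(t - s) * mdist m p q \<le> mdist m (P s) (P t)" by (simp add: algebra_simps)
    moreover have "mdist m (P s) (P t) \<le> (t - s) * mdist m p q" using Pl[OF st(1,2)] st by simp
    ultimately show ?thesis using st by simp
  qed
  show ?thesis unfolding geodesic_path_def
  proof (intro conjI ballI)
    show "P 0 = p" "P 1 = q" by (fact P0, fact P1)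
    fix s assume "s \<in> {0..1::real}" then show "P s \<in> mspace m" by (rule Pin)
  next
    fix s t assume st: "s \<in> {0..1::real}" "t \<in> {0..1::real}"
    show "mdist m (P s) (P t) = \<bar>s - t\<bar> * mdist m p q"
    proof (cases "s \<le> t")
      case True then show ?thesis using le st by blast
    next
      case False
      then have "mdist m (P t) (P s) = \<bar>t - s\<bar> * mdist m p q" using le st by simp
      then show ?thesis by (simp add: mdist_commute abs_minus_commute)
    qed
  qed
qed

theorem theorem1p1:
  fixes X :: "'a metric" and E :: "'b metric" and e :: "'a \<Rightarrow> 'b"
    and \<sigma> :: "'a \<Rightarrow> 'a \<Rightarrow> real \<Rightarrow> 'a"
  assumes "conical_bicombing X \<sigma>" and "reversible_bicombing X \<sigma>"
    and "injective_hull TYPE('b option) TYPE('b) X E e"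
  shows "\<exists>\<sigma>' :: 'b \<Rightarrow> 'b \<Rightarrow> real \<Rightarrow> 'b.
           conical_bicombing E \<sigma>' \<and> reversible_bicombing E \<sigma>' \<and>
           (\<forall>x\<in>mspace X. \<forall>y\<in>mspace X. \<forall>t\<in>{0..1}. e (\<sigma> x y t) = \<sigma>' (e x) (e y) t)"
proof -
  have hull: "injective_metric_space TYPE('b option) E \<and> isometric_embedding X E e \<and>
     (\<forall>(Z::'b metric) f. lip1_on E Z (mspace E) f \<and> isometric_embedding X Z (f \<circ> e)
        \<longrightarrow> isometric_embedding E Z f)"
    using assms(3) unfolding injective_hull_def .
  have injE: "injective_metric_space TYPE('b option) E" and iso: "isometric_embedding X E e"
    using hull by simp_all
  have minim: "isometric_embedding E Z f" if "lip1_on E Z (mspace E) f" "isometric_embedding X Z (f \<circ> e)"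
    for Z :: "'b metric" and f
    using hull that by blast
  have eX: "\<And>x. x \<in> mspace X \<Longrightarrow> e x \<in> mspace E" using iso unfolding isometric_embedding_def by blast
  have ed: "\<And>x y. x \<in> mspace X \<Longrightarrow> y \<in> mspace X \<Longrightarrow> mdist E (e x) (e y) = mdist X x y"
    using iso unfolding isometric_embedding_def by blast
  have bic: "\<forall>x\<in>mspace X. \<forall>y\<in>mspace X. geodesic_path X (\<sigma> x y) x y"
    using assms(1) unfolding conical_bicombing_def bicombing_def by blast
  have geo: "geodesic_path X (\<sigma> x y) x y" if "x \<in> mspace X" "y \<in> mspace X" for x y
    using bic that by blast
  have sin: "\<sigma> x y t \<in> mspace X" if "x \<in> mspace X" "y \<in> mspace X" "0 \<le> t" "t \<le> 1" for x y t
    using geo[OF that(1,2)] that(3,4) unfolding geodesic_path_def by simp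
  have s0: "\<sigma> x y 0 = x" if "x \<in> mspace X" "y \<in> mspace X" for x y
    using geo[OF that(1,2)] unfolding geodesic_path_def by simp
  have sd: "mdist X (\<sigma> x y s) (\<sigma> x y t) = \<bar>s - t\<bar> * mdist X x y"
    if "x \<in> mspace X" "y \<in> mspace X" "0 \<le> s" "s \<le> 1" "0 \<le> t" "t \<le> 1" for x y s t
    using geo[OF that(1,2)] that(3-6) unfolding geodesic_path_def by simp
  have conv: "\<forall>x\<in>mspace X. \<forall>y\<in>mspace X. \<forall>x'\<in>mspace X. \<forall>y'\<in>mspace X. \<forall>t\<in>{0..1}.
        mdist X (\<sigma> x y t) (\<sigma> x' y' t) \<le> (1 - t) * mdist X x x' + t * mdist X y y'"
    using assms(1) unfolding conical_bicombing_def by blast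
  have scon: "mdist X (\<sigma> x y t) (\<sigma> x' y' t) \<le> (1 - t) * mdist X x x' + t * mdist X y y'"
    if "x \<in> mspace X" "y \<in> mspace X" "x' \<in> mspace X" "y' \<in> mspace X" "0 \<le> t" "t \<le> 1" for x y x' y' t
    using conv that by simp
  have revh: "\<forall>x\<in>mspace X. \<forall>y\<in>mspace X. \<forall>t\<in>{0..1}. \<sigma> x y t = \<sigma> y x (1 - t)"
    using assms(2) unfolding reversible_bicombing_def by blast
  have srev: "\<sigma> x y t = \<sigma> y x (1 - t)" if "x \<in> mspace X" "y \<in> mspace X" "0 \<le> t" "t \<le> 1" for x y t
  proof -
    have "t \<in> {0..1}" using that by simp
    then show ?thesis using revh that(1,2) by blast
  qed
  have szz: "\<sigma> z z t = z" if z: "z \<in> mspace X" and t: "0 \<le> t" "t \<le> 1" for z t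
  proof -
    have "mdist X (\<sigma> z z 0) (\<sigma> z z t) = 0" using sd[OF z z _ _ t] z by simp
    then show ?thesis using s0[OF z z] sin[OF z z t] z by simp
  qed
  have extr: "\<exists>z\<in>mspace X. mdist E p (e w) + mdist E p (e z) \<le> mdist X w z + \<epsilon>"
    if p: "p \<in> mspace E" and w: "w \<in> mspace X" and eps: "\<epsilon> > 0" for p w \<epsilon>
  proof (rule ccontr)
    assume "\<not> ?thesis"
    then have big: "\<And>z. z \<in> mspace X \<Longrightarrow> mdist X w z + \<epsilon> < mdist E p (e w) + mdist E p (e z)" by force
    have pw: "0 < mdist E p (e w)" using big[OF w] w eps by simp
    define \<epsilon>' where "\<epsilon>' = min \<epsilon> (mdist E p (e w))"
    have e1: "0 < \<epsilon>'" "\<epsilon>' \<le> \<epsilon>" "\<epsilon>' \<le> mdist E p (e w)" using eps pw by (auto simp: \<epsilon>'_def)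
    define c where "c i = (case i of None \<Rightarrow> e w | Some z \<Rightarrow> e z)" for i
    define \<rho> where "\<rho> i = (case i of None \<Rightarrow> mdist E p (e w) - \<epsilon>' | Some z \<Rightarrow> mdist E p (e z))" for i
    define I where "I = insert None (Some ` mspace X)"
    have tri: "mdist E u v \<le> mdist E p u + mdist E p v" if "u \<in> mspace E" "v \<in> mspace E" for u v
      using mdist_triangle[OF that(1) p that(2)] by (simp add: mdist_commute)
    have "\<exists>q\<in>mspace E. \<forall>i\<in>I. mdist E q (c i) \<le> \<rho> i"
    proof (rule inj_hyperconvex[OF injE])
      show "I \<noteq> {}" by (simp add: I_def)
      fix i assume "i \<in> I" then show "c i \<in> mspace E" using eX w by (auto simp: I_def c_def)
    next
      fix i j assume ij: "i \<in> I" "j \<in> I"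
      show "mdist E (c i) (c j) \<le> \<rho> i + \<rho> j"
      proof (cases i)
        case None note i = this
        show ?thesis
        proof (cases j)
          case None then show ?thesis using i e1 eX[OF w] by (simp add: c_def \<rho>_def)
        next
          case (Some z')
          then have z': "z' \<in> mspace X" using ij by (auto simp: I_def)
          show ?thesis using i Some big[OF z'] e1 ed[OF w z'] by (simp add: c_def \<rho>_def)
        qed
      next
        case (Some z) note i = this
        then have z: "z \<in> mspace X" using ij by (auto simp: I_def)
        show ?thesis
        proof (cases j)
          case None then show ?thesis using i big[OF z] e1 ed[OF w z]
            by (simp add: c_def \<rho>_def mdist_commute)
        next
          case (Some z')
          then have z': "z' \<in> mspace X" using ij by (auto simp: I_def)
          show ?thesis using i Some tri[OF eX[OF z] eX[OF z']] by (simp add: c_def \<rho>_def)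
        qed
      qed
    qed
    then obtain q where q: "q \<in> mspace E" and qI: "\<forall>i\<in>I. mdist E q (c i) \<le> \<rho> i" by blast
    have qw: "mdist E q (e w) \<le> mdist E p (e w) - \<epsilon>'" using qI by (auto simp: I_def c_def \<rho>_def)
    have qz: "\<And>z. z \<in> mspace X \<Longrightarrow> mdist E q (e z) \<le> mdist E p (e z)" using qI by (auto simp: I_def c_def \<rho>_def)
    define f' where "f' v = (if v = p then q else v)" for v
    define A where "A = insert p (e ` mspace X)"
    have "lip1_on E E A f'" unfolding lip1_on_def
    proof (intro conjI ballI)
      show "f' ` A \<subseteq> mspace E" using q eX by (auto simp: f'_def A_def)
    next
      fix a b assume ab: "a \<in> A" "b \<in> A"
      show "mdist E (f' a) (f' b) \<le> mdist E a b"
      proof (cases "a = p")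
        case True note a = this
        show ?thesis
        proof (cases "b = p")
          case True then show ?thesis using a q p by (simp add: f'_def)
        next
          case False
          then obtain z where z: "z \<in> mspace X" "b = e z" using ab by (auto simp: A_def)
          then show ?thesis using a False qz[OF z(1)] by (simp add: f'_def)
        qed
      next
        case False note a = this
        then obtain z where z: "z \<in> mspace X" "a = e z" using ab by (auto simp: A_def)
        show ?thesis
        proof (cases "b = p")
          case True then show ?thesis using a z qz[OF z(1)] by (simp add: f'_def mdist_commute)
        next
          case False then show ?thesis using a by (simp add: f'_def)
        qed
      qed
    qed
    moreover have "A \<subseteq> mspace E" using p eX by (auto simp: A_def)
    ultimately obtain F where F: "lip1_on E E (mspace E) F" "\<forall>a\<in>A. F a = f' a"
      using inj_general[OF injE] by blast
    have Fe: "F (e z) = e z" if z: "z \<in> mspace X" for z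
    proof -
      have "F (e z) = f' (e z)" using F(2) z by (auto simp: A_def)
      moreover have "e z = p \<Longrightarrow> q = p" using qz[OF z] q p mdist_nonneg[of E q p]
        by (metis mdist_self mdist_zero order_antisym)
      ultimately show ?thesis by (auto simp: f'_def)
    qed
    have "isometric_embedding X E (F \<circ> e)"
      unfolding isometric_embedding_def using Fe eX ed by auto
    then have "isometric_embedding E E F" using minim[OF F(1)] by blast
    then have "mdist E (F p) (F (e w)) = mdist E p (e w)"
      using p eX[OF w] by (auto simp: isometric_embedding_def)
    moreover have "F p = q" using F(2) by (simp add: A_def f'_def)
    ultimately show False using qw e1 Fe[OF w] by simp
  qed
  have sconv: "mdist E p (e (\<sigma> x y t)) \<le> (1 - t) * mdist E p (e x) + t * mdist E p (e y)"
    if p: "p \<in> mspace E" and x: "x \<in> mspace X" and y: "y \<in> mspace X" and t: "0 \<le> t" "t \<le> 1" for p x y t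
  proof (rule field_le_epsilon)
    fix \<epsilon> :: real assume eps: "0 < \<epsilon>"
    have sx: "\<sigma> x y t \<in> mspace X" by (rule sin[OF x y t])
    obtain z where z: "z \<in> mspace X" and hz: "mdist E p (e (\<sigma> x y t)) + mdist E p (e z) \<le> mdist X (\<sigma> x y t) z + \<epsilon>"
      using extr[OF p sx eps] by blast
    have "mdist X (\<sigma> x y t) z = mdist X (\<sigma> x y t) (\<sigma> z z t)" using szz[OF z t] by simp
    also have "\<dots> \<le> (1 - t) * mdist X x z + t * mdist X y z" by (rule scon[OF x y z z t])
    finally have h1: "mdist X (\<sigma> x y t) z \<le> (1 - t) * mdist X x z + t * mdist X y z" .
    have "mdist X x z \<le> mdist E p (e x) + mdist E p (e z)"
      using mdist_triangle[OF eX[OF x] p eX[OF z]] ed[OF x z] by (simp add: mdist_commute)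
    then have h2: "(1 - t) * mdist X x z \<le> (1 - t) * (mdist E p (e x) + mdist E p (e z))"
      using t by (intro mult_left_mono) auto
    have "mdist X y z \<le> mdist E p (e y) + mdist E p (e z)"
      using mdist_triangle[OF eX[OF y] p eX[OF z]] ed[OF y z] by (simp add: mdist_commute)
    then have h3: "t * mdist X y z \<le> t * (mdist E p (e y) + mdist E p (e z))"
      using t by (intro mult_left_mono) auto
    show "mdist E p (e (\<sigma> x y t)) \<le> (1 - t) * mdist E p (e x) + t * mdist E p (e y) + \<epsilon>"
      using hz h1 h2 h3 by (simp add: algebra_simps)
  qed
  have L: "mdist X (\<sigma> x y t) (\<sigma> x' y' s) \<le> kdist E (lin2 (e x) (e y) t) (lin2 (e x') (e y') s)"
    if x: "x \<in> mspace X" and y: "y \<in> mspace X" and x': "x' \<in> mspace X" and y': "y' \<in> mspace X"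
      and t: "0 \<le> t" "t \<le> 1" and s: "0 \<le> s" "s \<le> 1" and ts: "t \<le> s"
      and Q: "mdist X x x' + mdist X y y' \<le> mdist X x y' + mdist X y x'" for x y x' y' t s
  proof -
    define \<phi> where "\<phi> w = min (mdist E w (e y') - mdist X x y') (mdist E w (e x') - mdist X x x')" for w
    have \<phi>lip: "\<phi> \<in> lipf E" unfolding lipf_def
    proof (intro CollectI ballI)
      fix a b assume ab: "a \<in> mspace E" "b \<in> mspace E"
      have "mdist E a (e y') - mdist E b (e y') \<le> mdist E a b"
        using mdist_triangle[OF ab(1) ab(2) eX[OF y']] by simp
      moreover have "mdist E a (e x') - mdist E b (e x') \<le> mdist E a b"
        using mdist_triangle[OF ab(1) ab(2) eX[OF x']] by simp
      ultimately show "\<phi> a - \<phi> b \<le> mdist E a b" unfolding \<phi>_def by linarith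
    qed
    have v1: "\<phi> (e x) = 0" using ed[OF x y'] ed[OF x x'] by (simp add: \<phi>_def)
    have v2: "mdist X y y' - mdist X x y' \<le> \<phi> (e y)"
      using ed[OF y y'] ed[OF y x'] Q by (simp add: \<phi>_def)
    have v3: "\<phi> (e x') \<le> - mdist X x x'" using eX[OF x'] by (simp add: \<phi>_def)
    have v4: "\<phi> (e y') \<le> - mdist X x y'" using eX[OF y'] by (simp add: \<phi>_def)
    have "mdist X (\<sigma> x y t) (\<sigma> x' y' s) \<le> mdist X (\<sigma> x y t) (\<sigma> x y' t) + mdist X (\<sigma> x y' t) (\<sigma> x y' s)
        + mdist X (\<sigma> x y' s) (\<sigma> x' y' s)"
      using mdist_triangle[OF sin[OF x y t] sin[OF x y' t] sin[OF x' y' s]]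
        mdist_triangle[OF sin[OF x y' t] sin[OF x y' s] sin[OF x' y' s]] by linarith
    also have "\<dots> \<le> t * mdist X y y' + (s - t) * mdist X x y' + (1 - s) * mdist X x x'"
    proof -
      have "mdist X (\<sigma> x y t) (\<sigma> x y' t) \<le> (1 - t) * mdist X x x + t * mdist X y y'"
        by (rule scon[OF x y x y' t])
      moreover have "mdist X (\<sigma> x y' t) (\<sigma> x y' s) = (s - t) * mdist X x y'"
        using sd[OF x y' t s] ts by simp
      moreover have "mdist X (\<sigma> x y' s) (\<sigma> x' y' s) \<le> (1 - s) * mdist X x x' + s * mdist X y' y'"
        by (rule scon[OF x y' x' y' s])
      ultimately show ?thesis using x y' by simp
    qed
    also have "\<dots> \<le> mpair \<phi> (lin2 (e x) (e y) t) - mpair \<phi> (lin2 (e x') (e y') s)"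
    proof -
      have "t * (mdist X y y' - mdist X x y') \<le> t * \<phi> (e y)" using v2 t by (intro mult_left_mono) auto
      moreover have "(1 - s) * \<phi> (e x') \<le> (1 - s) * (- mdist X x x')" using v3 s by (intro mult_left_mono) auto
      moreover have "s * \<phi> (e y') \<le> s * (- mdist X x y')" using v4 s by (intro mult_left_mono) auto
      ultimately show ?thesis unfolding mpair_lin2 using v1 by (simp add: algebra_simps)
    qed
    also have "\<dots> \<le> kdist E (lin2 (e x) (e y) t) (lin2 (e x') (e y') s)"
      by (rule kd_lower[OF linsetI linsetI \<phi>lip]) (use eX x y x' y' t s in auto)
    finally show ?thesis .
  qed
  have G: "mdist X (\<sigma> x y t) (\<sigma> x' y' s) \<le> kdist E (lin2 (e x) (e y) t) (lin2 (e x') (e y') s)"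
    if x: "x \<in> mspace X" and y: "y \<in> mspace X" and x': "x' \<in> mspace X" and y': "y' \<in> mspace X"
      and t: "0 \<le> t" "t \<le> 1" and s: "0 \<le> s" "s \<le> 1" for x y x' y' t s
  proof (cases "mdist X x x' + mdist X y y' \<le> mdist X x y' + mdist X y x'")
    case True
    show ?thesis
    proof (cases "t \<le> s")
      case True
      then show ?thesis using L[OF x y x' y' t s] \<open>mdist X x x' + mdist X y y' \<le> _\<close> by blast
    next
      case False
      have "mdist X x' x + mdist X y' y \<le> mdist X x' y + mdist X y' x"
        using \<open>mdist X x x' + mdist X y y' \<le> _\<close> by (simp add: mdist_commute)
      then have "mdist X (\<sigma> x' y' s) (\<sigma> x y t) \<le> kdist E (lin2 (e x') (e y') s) (lin2 (e x) (e y) t)"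
        using L[OF x' y' x y s t] False by simp
      then show ?thesis by (simp add: mdist_commute kd_commute)
    qed
  next
    case False
    have eqs: "\<sigma> x' y' s = \<sigma> y' x' (1 - s)" by (rule srev[OF x' y' s])
    have eql: "lin2 (e x') (e y') s = lin2 (e y') (e x') (1 - s)" by (rule lin2_rev)
    have s': "0 \<le> 1 - s" "1 - s \<le> 1" using s by auto
    show ?thesis
    proof (cases "t \<le> 1 - s")
      case True
      have "mdist X x y' + mdist X y x' \<le> mdist X x x' + mdist X y y'" using False by simp
      then show ?thesis using L[OF x y y' x' t s' True] eqs eql by simp
    next
      case False
      have "mdist X y' x + mdist X x' y \<le> mdist X y' y + mdist X x' x"
        using \<open>\<not> (mdist X x x' + mdist X y y' \<le> _)\<close> by (simp add: mdist_commute)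
      then have "mdist X (\<sigma> y' x' (1 - s)) (\<sigma> x y t) \<le> kdist E (lin2 (e y') (e x') (1 - s)) (lin2 (e x) (e y) t)"
        using L[OF y' x' x y s' t] False by simp
      then show ?thesis using eqs eql by (simp add: mdist_commute kd_commute)
    qed
  qed
  define B where "B = metric (linset E, kdist E)"
  have mB: "mspace B = linset E" "mdist B = kdist E"
    using kd_metric[of E] by (simp_all add: B_def Metric_space.mspace_metric Metric_space.mdist_metric)
  define rep where "rep \<mu> r \<longleftrightarrow> (\<exists>p\<in>mspace E. \<mu> = lin2 p p 0 \<and> r = p) \<or>
      (\<exists>x\<in>mspace X. \<exists>y\<in>mspace X. \<exists>t. 0 \<le> t \<and> t \<le> 1 \<and> \<mu> = lin2 (e x) (e y) t \<and> r = e (\<sigma> x y t))" for \<mu> r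
  define A where "A = {\<mu>. \<exists>r. rep \<mu> r}"
  define f where "f \<mu> = (SOME r. rep \<mu> r)" for \<mu>
  have repE: "rep \<mu> r \<Longrightarrow> r \<in> mspace E \<and> \<mu> \<in> linset E" for \<mu> r
    unfolding rep_def using eX sin by (auto intro: linsetI)
  have keylip: "mdist E r r' \<le> kdist E \<mu> \<nu>" if "rep \<mu> r" "rep \<nu> r'" for \<mu> \<nu> r r'
  proof -
    have one_two: "mdist E p (e (\<sigma> x y t)) \<le> kdist E (lin2 p p 0) (lin2 (e x) (e y) t)"
      if p: "p \<in> mspace E" and x: "x \<in> mspace X" and y: "y \<in> mspace X" and t: "0 \<le> t" "t \<le> 1" for p x y t
    proof -
      have "mdist E p (e (\<sigma> x y t)) \<le> (1 - t) * mdist E p (e x) + t * mdist E p (e y)"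
        by (rule sconv[OF p x y t])
      also have "\<dots> = mpair (\<lambda>w. - mdist E w p) (lin2 p p 0) - mpair (\<lambda>w. - mdist E w p) (lin2 (e x) (e y) t)"
        using p by (simp add: mpair_lin2 mdist_commute algebra_simps)
      also have "\<dots> \<le> kdist E (lin2 p p 0) (lin2 (e x) (e y) t)"
        by (rule kd_lower[OF linsetI linsetI lipf_neg[OF lipf_dist[OF p]]]) (use p eX x y t in auto)
      finally show ?thesis .
    qed
    from that show ?thesis unfolding rep_def
    proof (elim disjE bexE exE conjE)
      fix p q assume p: "p \<in> mspace E" "\<mu> = lin2 p p 0" "r = p" and q: "q \<in> mspace E" "\<nu> = lin2 q q 0" "r' = q"
      show ?thesis
        using kd_lower[OF linsetI[OF p(1) p(1)] linsetI[OF q(1) q(1)] lipf_dist[OF q(1)], of 0 0] p q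
        by (simp add: mpair_lin2)
    next
      fix p x y t assume p: "p \<in> mspace E" "\<mu> = lin2 p p 0" "r = p"
        and xy: "x \<in> mspace X" "y \<in> mspace X" "0 \<le> t" "t \<le> 1" "\<nu> = lin2 (e x) (e y) t" "r' = e (\<sigma> x y t)"
      then show ?thesis using one_two[OF p(1) xy(1-4)] by simp
    next
      fix p x y t assume p: "p \<in> mspace E" "\<nu> = lin2 p p 0" "r' = p"
        and xy: "x \<in> mspace X" "y \<in> mspace X" "0 \<le> t" "t \<le> 1" "\<mu> = lin2 (e x) (e y) t" "r = e (\<sigma> x y t)"
      then show ?thesis using one_two[OF p(1) xy(1-4)] by (simp add: mdist_commute kd_commute)
    next
      fix x y t x' y' s
      assume xy: "x \<in> mspace X" "y \<in> mspace X" "0 \<le> t" "t \<le> 1" "\<mu> = lin2 (e x) (e y) t" "r = e (\<sigma> x y t)"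
        and xy': "x' \<in> mspace X" "y' \<in> mspace X" "0 \<le> s" "s \<le> 1" "\<nu> = lin2 (e x') (e y') s" "r' = e (\<sigma> x' y' s)"
      then show ?thesis using G[OF xy(1,2) xy'(1,2) xy(3,4) xy'(3,4)] ed sin by simp
    qed
  qed
  have fA: "rep \<mu> (f \<mu>)" if "\<mu> \<in> A" for \<mu>
    using that unfolding A_def f_def by (auto intro: someI)
  have "lip1_on B E A f" unfolding lip1_on_def mB
    using fA repE keylip by blast
  moreover have "A \<subseteq> mspace B" unfolding mB A_def using repE by blast
  ultimately have "\<exists>g. lip1_on B E (mspace B) g \<and> (\<forall>a\<in>A. g a = f a)"
    by (rule inj_general[OF injE, rotated])
  then obtain g where g: "lip1_on B E (linset E) g" "\<forall>a\<in>A. g a = f a"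
    unfolding mB by blast
  have grep: "g \<mu> = r" if "rep \<mu> r" for \<mu> r
  proof -
    have \<mu>A: "\<mu> \<in> A" using that by (auto simp: A_def)
    have "mdist E (f \<mu>) r \<le> kdist E \<mu> \<mu>" using keylip[OF fA[OF \<mu>A] that] .
    moreover have "kdist E \<mu> \<mu> = 0" using repE[OF that] kd_self by blast
    moreover have "f \<mu> \<in> mspace E" "r \<in> mspace E" using repE fA[OF \<mu>A] that by blast+
    ultimately have "f \<mu> = r" by (metis mdist_nonneg mdist_zero order_antisym)
    then show ?thesis using g(2) \<mu>A by simp
  qed
  have gE: "g \<mu> \<in> mspace E" if "\<mu> \<in> linset E" for \<mu>
    using g(1) that unfolding lip1_on_def by (simp add: image_subset_iff)
  have gL: "mdist E (g \<mu>) (g \<nu>) \<le> kdist E \<mu> \<nu>" if "\<mu> \<in> linset E" "\<nu> \<in> linset E" for \<mu> \<nu>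
    using g(1) that unfolding lip1_on_def mB by simp
  define \<sigma>' where "\<sigma>' p q t = g (lin2 p q t)" for p q t
  have gin: "\<sigma>' p q t \<in> mspace E" if "p \<in> mspace E" "q \<in> mspace E" "0 \<le> t" "t \<le> 1" for p q t
    using gE[OF linsetI[OF that]] unfolding \<sigma>'_def .
  have gd: "mdist E (\<sigma>' p q t) (\<sigma>' p' q' s) \<le> kdist E (lin2 p q t) (lin2 p' q' s)"
    if "p \<in> mspace E" "q \<in> mspace E" "0 \<le> t" "t \<le> 1" "p' \<in> mspace E" "q' \<in> mspace E" "0 \<le> s" "s \<le> 1"
    for p q t p' q' s
    using gL[OF linsetI[OF that(1-4)] linsetI[OF that(5-8)]] unfolding \<sigma>'_def .
  have g0: "\<sigma>' p q 0 = p" if "p \<in> mspace E" for p q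
  proof -
    have "rep (lin2 p p 0) p" using that by (auto simp: rep_def)
    then show ?thesis unfolding \<sigma>'_def by (subst lin2_0) (rule grep)
  qed
  have g1: "\<sigma>' p q 1 = q" if "q \<in> mspace E" for p q
  proof -
    have "rep (lin2 q q 0) q" using that by (auto simp: rep_def)
    then show ?thesis unfolding \<sigma>'_def by (subst lin2_1) (rule grep)
  qed
  have bicE: "bicombing E \<sigma>'" unfolding bicombing_def
  proof (intro ballI)
    fix p q assume pq: "p \<in> mspace E" "q \<in> mspace E"
    show "geodesic_path E (\<sigma>' p q) p q"
    proof (rule geod_from_lip)
      show "\<sigma>' p q 0 = p" by (rule g0[OF pq(1)])
      show "\<sigma>' p q 1 = q" by (rule g1[OF pq(2)])
      fix s assume "s \<in> {0..1::real}" then show "\<sigma>' p q s \<in> mspace E" using gin pq by auto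
    next
      fix s t assume st: "s \<in> {0..1::real}" "t \<in> {0..1::real}"
      then have "mdist E (\<sigma>' p q s) (\<sigma>' p q t) \<le> kdist E (lin2 p q s) (lin2 p q t)" using gd pq by auto
      also have "\<dots> \<le> \<bar>s - t\<bar> * mdist E p q" using kd_geo pq st by auto
      finally show "mdist E (\<sigma>' p q s) (\<sigma>' p q t) \<le> \<bar>s - t\<bar> * mdist E p q" .
    qed
  qed
  have "conical_bicombing E \<sigma>'" unfolding conical_bicombing_def
  proof (intro conjI ballI bicE)
    fix p q p' q' t assume h: "p \<in> mspace E" "q \<in> mspace E" "p' \<in> mspace E" "q' \<in> mspace E" "t \<in> {0..1::real}"
    then have "mdist E (\<sigma>' p q t) (\<sigma>' p' q' t) \<le> kdist E (lin2 p q t) (lin2 p' q' t)" using gd by auto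
    also have "\<dots> \<le> (1 - t) * mdist E p p' + t * mdist E q q'" using kd_con h by auto
    finally show "mdist E (\<sigma>' p q t) (\<sigma>' p' q' t) \<le> (1 - t) * mdist E p p' + t * mdist E q q'" .
  qed
  moreover have "reversible_bicombing E \<sigma>'" unfolding reversible_bicombing_def
  proof (intro conjI ballI bicE)
    fix p q t show "\<sigma>' p q t = \<sigma>' q p (1 - t)" unfolding \<sigma>'_def by (subst lin2_rev) (rule refl)
  qed
  moreover have "\<forall>x\<in>mspace X. \<forall>y\<in>mspace X. \<forall>t\<in>{0..1}. e (\<sigma> x y t) = \<sigma>' (e x) (e y) t"
  proof (intro ballI)
    fix x y t assume "x \<in> mspace X" "y \<in> mspace X" "t \<in> {0..1::real}"
    then show "e (\<sigma> x y t) = \<sigma>' (e x) (e y) t"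
      unfolding \<sigma>'_def by (intro grep[symmetric]) (auto simp: rep_def)
  qed
  ultimately show ?thesis by blast
qed

end
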